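(* Let $(X,d)$ be a separable, zero-dimensional metric space with $d\le 1$. Then there exist a set $A\subseteq{}^\omega\omega$ and a homeomorphism $h:A\to X$ such that $d(h(x),h(y))\le d'(x,y)$ for all $x,y\in A$, where $d'$ is the usual metric on ${}^\omega\omega$. If moreover $d$ is an ultrametric, then $h$ can be chosen so that in addition $d'(h^{-1}(u),h^{-1}(v))\le 2\,d(u,v)$ for all $u,v\in X$. If $d$ is also complete, then the set $A$ can be taken to be closed in ${}^\omega\omega$.
   Context: Work in ZF plus countable choice over the reals. ${}^\omega\omega$ is the Baire space of all infinite sequences of natural numbers, with the usual ultrametric $d'(x,y)=2^{-n}$ where $n$ is least with $x(n)\ne y(n)$ (and $d'(x,x)=0$). *)

theory Defs
  imports "HOL-Analysis.Analysis"
begin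

definition baire_dist :: "(nat \<Rightarrow> nat) \<Rightarrow> (nat \<Rightarrow> nat) \<Rightarrow> real" where
  "baire_dist x y = (if x = y then 0 else (1/2) ^ (LEAST n. x n \<noteq> y n))"

definition baire_topology :: "(nat \<Rightarrow> nat) topology" where
  "baire_topology = Metric_space.mtopology UNIV baire_dist"

definition ultrametric :: "'a set \<Rightarrow> ('a \<Rightarrow> 'a \<Rightarrow> real) \<Rightarrow> bool" where
  "ultrametric X d \<longleftrightarrow> (\<forall>x\<in>X. \<forall>y\<in>X. \<forall>z\<in>X. d x z \<le> max (d x y) (d y z))"

end

theory Submission imports Defs begin

lemma baire_dist_neq:
  assumes "x \<noteq> y"
  shows "\<exists>n. baire_dist x y = (1/2)^n \<and> (\<forall>i<n. x i = y i) \<and> x n \<noteq> y n"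
proof -
  have ex: "\<exists>n. x n \<noteq> y n" using assms by auto
  define n where "n = (LEAST n. x n \<noteq> y n)"
  have h1: "x n \<noteq> y n" unfolding n_def by (rule LeastI_ex[OF ex])
  have h2: "\<forall>i<n. x i = y i" unfolding n_def using not_less_Least by blast
  have h3: "baire_dist x y = (1/2)^n" using assms unfolding baire_dist_def n_def by simp
  show ?thesis using h1 h2 h3 by blast
qed

lemma baire_dist_le_iff: "baire_dist x y \<le> (1/2)^k \<longleftrightarrow> (\<forall>i<k. x i = y i)"
proof (cases "x = y")
  case True then show ?thesis by (simp add: baire_dist_def)
next
  case False
  then obtain n where n: "baire_dist x y = (1/2)^n" "\<forall>i<n. x i = y i" "x n \<noteq> y n"
    using baire_dist_neq by blast
  have "(1/2::real)^n \<le> (1/2)^k \<longleftrightarrow> k \<le> n"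
    by (simp add: power_decreasing_iff)
  also have "\<dots> \<longleftrightarrow> (\<forall>i<k. x i = y i)"
  proof
    assume "k \<le> n" thus "\<forall>i<k. x i = y i" using n(2) by auto
  next
    assume a: "\<forall>i<k. x i = y i" show "k \<le> n"
    proof (rule ccontr)
      assume "\<not> k \<le> n" then have "n < k" by simp
      with a n(3) show False by blast
    qed
  qed
  finally show ?thesis using n by simp
qed

lemma baire_dist_sym: "baire_dist x y = baire_dist y x"
proof -
  have e: "(\<lambda>n. x n \<noteq> y n) = (\<lambda>n. y n \<noteq> x n)" by (rule ext) auto
  show ?thesis unfolding baire_dist_def e by auto
qed

lemma baire_dist_ultra: "baire_dist x z \<le> max (baire_dist x y) (baire_dist y z)"
proof (cases "x = y \<or> y = z")
  case True then show ?thesis by (auto simp: baire_dist_def)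
next
  case False
  then obtain a b where a: "baire_dist x y = (1/2)^a" and b: "baire_dist y z = (1/2)^b"
    using baire_dist_neq by blast
  define k where "k = min a b"
  have k1: "(1/2::real)^a \<le> (1/2)^k" by (rule power_decreasing) (auto simp: k_def)
  have k2: "(1/2::real)^b \<le> (1/2)^k" by (rule power_decreasing) (auto simp: k_def)
  have kab: "k = a \<or> k = b" unfolding k_def by linarith
  have mx: "max (baire_dist x y) (baire_dist y z) = (1/2)^k"
    using k1 k2 kab unfolding a b by (auto simp: max_def)
  have "baire_dist x y \<le> (1/2)^k" "baire_dist y z \<le> (1/2)^k"
    using k1 k2 a b by auto
  then have "\<forall>i<k. x i = z i" unfolding baire_dist_le_iff by auto
  then have "baire_dist x z \<le> (1/2)^k" unfolding baire_dist_le_iff .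
  with mx show ?thesis by simp
qed

lemma baire_metric: "Metric_space UNIV baire_dist"
proof
  fix x y z :: "nat \<Rightarrow> nat"
  show "0 \<le> baire_dist x y" by (simp add: baire_dist_def)
  show "baire_dist x y = baire_dist y x" by (rule baire_dist_sym)
  show "(baire_dist x y = 0) = (x = y)" by (simp add: baire_dist_def)
  have "baire_dist x z \<le> max (baire_dist x y) (baire_dist y z)" by (rule baire_dist_ultra)
  moreover have "0 \<le> baire_dist x y" "0 \<le> baire_dist y z" by (simp_all add: baire_dist_def)
  ultimately show "baire_dist x z \<le> baire_dist x y + baire_dist y z" by linarith
qed

lemma small_pow:
  assumes "(0::real) < t" shows "\<exists>n. (1/2::real)^n < t"
  using real_arch_pow_inv[OF assms, of "1/2"] by auto

lemma coding:
  fixes X :: "'a set" and d :: "'a \<Rightarrow> 'a \<Rightarrow> real" and c :: "nat \<Rightarrow> 'a \<Rightarrow> nat"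
  assumes metric: "Metric_space X d"
    and ca: "\<And>k u v. u \<in> X \<Longrightarrow> v \<in> X \<Longrightarrow> (\<forall>i<k. c i u = c i v) \<Longrightarrow> d u v \<le> (1/2)^k"
    and cb: "\<And>i u. u \<in> X \<Longrightarrow> \<exists>e>0. \<forall>v\<in>X. d u v < e \<longrightarrow> c i v = c i u"
    and f_def: "f = (\<lambda>u i. c i u)"
  shows "homeomorphic_map (subtopology baire_topology (f`X)) (Metric_space.mtopology X d) (inv_into X f)
     \<and> (\<forall>x\<in>f`X. \<forall>y\<in>f`X. d (inv_into X f x) (inv_into X f y) \<le> baire_dist x y)
     \<and> (\<forall>u\<in>X. inv_into (f`X) (inv_into X f) u = f u)
     \<and> (Metric_space.mcomplete X d \<longrightarrow> closedin baire_topology (f`X))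
     \<and> ((\<forall>k u v. u \<in> X \<longrightarrow> v \<in> X \<longrightarrow> c k u \<noteq> c k v \<longrightarrow> (1/2)^(k+1) \<le> d u v) \<longrightarrow>
         (\<forall>u\<in>X. \<forall>v\<in>X. baire_dist (inv_into (f`X) (inv_into X f) u) (inv_into (f`X) (inv_into X f) v) \<le> 2 * d u v))"
proof -
  interpret M: Metric_space X d by (rule metric)
  interpret B: Metric_space UNIV baire_dist by (rule baire_metric)
  interpret S: Submetric UNIV baire_dist "f`X"
    by (simp add: Submetric_def Submetric_axioms_def baire_metric)
  define h where "h = inv_into X f"
  have btop: "baire_topology = B.mtopology" by (simp add: baire_topology_def)
  have inj: "inj_on f X"
  proof (rule inj_onI)
    fix u v assume u: "u \<in> X" and v: "v \<in> X" and fe: "f u = f v"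
    have all: "\<And>k. d u v \<le> (1/2)^k"
      using ca[OF u v] fe unfolding f_def by (metis fun_cong)
    show "u = v"
    proof (rule ccontr)
      assume "u \<noteq> v"
      then have "0 < d u v" using M.zero[OF u v] M.nonneg[of u v] by linarith
      then obtain n where "(1/2::real)^n < d u v" using small_pow by blast
      with all[of n] show False by linarith
    qed
  qed
  have hf: "\<And>u. u \<in> X \<Longrightarrow> h (f u) = u" unfolding h_def using inj by (simp add: inv_into_f_f)
  have fh: "\<And>x. x \<in> f`X \<Longrightarrow> f (h x) = x" unfolding h_def by (simp add: f_inv_into_f)
  have hX: "\<And>x. x \<in> f`X \<Longrightarrow> h x \<in> X" unfolding h_def by (simp add: inv_into_into)
  have lip: "\<And>u v. u \<in> X \<Longrightarrow> v \<in> X \<Longrightarrow> d u v \<le> baire_dist (f u) (f v)"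
  proof -
    fix u v assume u: "u \<in> X" and v: "v \<in> X"
    show "d u v \<le> baire_dist (f u) (f v)"
    proof (cases "f u = f v")
      case True
      then have "u = v" using inj u v by (meson inj_onD)
      then show ?thesis using u by (simp add: baire_dist_def)
    next
      case False
      then obtain n where n: "baire_dist (f u) (f v) = (1/2)^n" "\<forall>i<n. f u i = f v i"
        using baire_dist_neq by blast
      have "\<forall>i<n. c i u = c i v" using n(2) unfolding f_def by simp
      then show ?thesis using ca[OF u v] n(1) by simp
    qed
  qed
  have loc: "\<And>u k. u \<in> X \<Longrightarrow> \<exists>e>0. \<forall>v\<in>X. d u v < e \<longrightarrow> (\<forall>i<k. c i v = c i u)"
  proof -
    fix u k assume u: "u \<in> X"
    show "\<exists>e>0. \<forall>v\<in>X. d u v < e \<longrightarrow> (\<forall>i<k. c i v = c i u)"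
    proof (induction k)
      case 0 show ?case by (rule exI[of _ 1]) simp
    next
      case (Suc k)
      then obtain e1 where e1: "e1 > 0" "\<forall>v\<in>X. d u v < e1 \<longrightarrow> (\<forall>i<k. c i v = c i u)" by blast
      obtain e2 where e2: "e2 > 0" "\<forall>v\<in>X. d u v < e2 \<longrightarrow> c k v = c k u" using cb[OF u] by blast
      show ?case
      proof (rule exI[of _ "min e1 e2"], intro conjI ballI impI allI)
        show "0 < min e1 e2" using e1 e2 by simp
        fix v i assume v: "v \<in> X" and dv: "d u v < min e1 e2" and i: "i < Suc k"
        show "c i v = c i u"
        proof (cases "i < k")
          case True then show ?thesis using e1 v dv by auto
        next
          case False then have "i = k" using i by simp
          then show ?thesis using e2 v dv by auto
        qed
      qed
    qed
  qed
  have subM: "Metric_space (f`X) baire_dist" by (rule B.subspace) simp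
  have subtop: "subtopology baire_topology (f`X) = Metric_space.mtopology (f`X) baire_dist"
    using S.mtopology_submetric btop by simp
  have cont_f: "continuous_map M.mtopology (Metric_space.mtopology (f`X) baire_dist) f"
    unfolding M.metric_continuous_map[OF subM]
  proof (intro conjI ballI allI impI)
    show "f ` X \<subseteq> f ` X" by simp
    fix a :: 'a and \<epsilon> :: real assume a: "a \<in> X" and e: "0 < \<epsilon>"
    obtain k where k: "(1/2::real)^k < \<epsilon>" using small_pow[OF e] by blast
    obtain \<delta> where \<delta>: "\<delta> > 0" "\<forall>v\<in>X. d a v < \<delta> \<longrightarrow> (\<forall>i<k. c i v = c i a)" using loc[OF a] by blast
    show "\<exists>\<delta>>0. \<forall>x. x \<in> X \<and> d a x < \<delta> \<longrightarrow> baire_dist (f a) (f x) < \<epsilon>"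
    proof (rule exI[of _ \<delta>], intro conjI allI impI)
      show "0 < \<delta>" by fact
      fix x assume x: "x \<in> X \<and> d a x < \<delta>"
      then have "\<forall>i<k. f a i = f x i" using \<delta> unfolding f_def by auto
      then have "baire_dist (f a) (f x) \<le> (1/2)^k" by (simp add: baire_dist_le_iff)
      then show "baire_dist (f a) (f x) < \<epsilon>" using k by linarith
    qed
  qed
  have cont_h: "continuous_map (Metric_space.mtopology (f`X) baire_dist) M.mtopology h"
    unfolding Metric_space.metric_continuous_map[OF subM metric]
  proof (intro conjI ballI allI impI)
    show "h ` f ` X \<subseteq> X" using hX by blast
    fix a and \<epsilon> :: real assume a: "a \<in> f ` X" and e: "0 < \<epsilon>"
    show "\<exists>\<delta>>0. \<forall>x. x \<in> f ` X \<and> baire_dist a x < \<delta> \<longrightarrow> d (h a) (h x) < \<epsilon>"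
    proof (rule exI[of _ \<epsilon>], intro conjI allI impI)
      show "0 < \<epsilon>" by fact
      fix x assume x: "x \<in> f ` X \<and> baire_dist a x < \<epsilon>"
      have "d (h a) (h x) \<le> baire_dist (f (h a)) (f (h x))" using lip hX a x by blast
      also have "\<dots> = baire_dist a x" using fh a x by simp
      finally show "d (h a) (h x) < \<epsilon>" using x by linarith
    qed
  qed
  have homeo: "homeomorphic_map (subtopology baire_topology (f`X)) M.mtopology h"
    unfolding homeomorphic_map_maps subtop
  proof (rule exI[of _ f], unfold homeomorphic_maps_def, intro conjI ballI)
    show "continuous_map (Metric_space.mtopology (f ` X) baire_dist) M.mtopology h" by (rule cont_h)
    show "continuous_map M.mtopology (Metric_space.mtopology (f ` X) baire_dist) f" by (rule cont_f)
    fix x assume "x \<in> topspace (Metric_space.mtopology (f ` X) baire_dist)"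
    then show "f (h x) = x" using fh Metric_space.topspace_mtopology[OF subM] by simp
  next
    fix y assume "y \<in> topspace M.mtopology"
    then show "h (f y) = y" using hf by simp
  qed
  have lip2: "\<forall>x\<in>f`X. \<forall>y\<in>f`X. d (h x) (h y) \<le> baire_dist x y"
    using lip hX fh by (metis)
  have injh: "inj_on h (f`X)" unfolding h_def by (rule inj_on_inv_into) simp
  have invh: "\<forall>u\<in>X. inv_into (f`X) h u = f u"
    using inv_into_f_eq[OF injh] hf by blast
  have closed: "M.mcomplete \<longrightarrow> closedin baire_topology (f`X)"
  proof
    assume comp: M.mcomplete
    show "closedin baire_topology (f`X)"
      unfolding btop B.metric_closedin_iff_sequentially_closed
    proof (intro conjI allI impI)
      show "f ` X \<subseteq> UNIV" by simp
      fix \<sigma> l assume asm: "range \<sigma> \<subseteq> f ` X \<and> limitin B.mtopology \<sigma> l sequentially"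
      then have rng: "\<And>n. \<sigma> n \<in> f`X" by auto
      have BC: "B.MCauchy \<sigma>" using asm B.convergent_imp_MCauchy by blast
      have "M.MCauchy (h \<circ> \<sigma>)"
        unfolding M.MCauchy_def
      proof (intro conjI allI impI)
        show "range (h \<circ> \<sigma>) \<subseteq> X" using hX rng by auto
        fix \<epsilon> :: real assume e: "0 < \<epsilon>"
        then obtain N where N: "\<forall>n n'. N \<le> n \<longrightarrow> N \<le> n' \<longrightarrow> baire_dist (\<sigma> n) (\<sigma> n') < \<epsilon>"
          using BC unfolding B.MCauchy_def by blast
        show "\<exists>N. \<forall>n n'. N \<le> n \<longrightarrow> N \<le> n' \<longrightarrow> d ((h \<circ> \<sigma>) n) ((h \<circ> \<sigma>) n') < \<epsilon>"
        proof (intro exI allI impI)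
          fix n n' assume "N \<le> n" "N \<le> n'"
          then have "baire_dist (\<sigma> n) (\<sigma> n') < \<epsilon>" using N by blast
          moreover have "d (h (\<sigma> n)) (h (\<sigma> n')) \<le> baire_dist (\<sigma> n) (\<sigma> n')"
            using lip2 rng by blast
          ultimately show "d ((h \<circ> \<sigma>) n) ((h \<circ> \<sigma>) n') < \<epsilon>" by simp
        qed
      qed
      then obtain w where w: "limitin M.mtopology (h \<circ> \<sigma>) w sequentially"
        using comp unfolding M.mcomplete_def by blast
      have wX: "w \<in> X" using w M.limitin_metric by blast
      have cont_f': "continuous_map M.mtopology B.mtopology f"
        using cont_f subtop btop continuous_map_in_subtopology by metis
      have "limitin B.mtopology (f \<circ> (h \<circ> \<sigma>)) (f w) sequentially"
        by (rule continuous_map_limit[OF cont_f' w])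
      moreover have "f \<circ> (h \<circ> \<sigma>) = \<sigma>" using fh rng by auto
      ultimately have "limitin B.mtopology \<sigma> (f w) sequentially" by simp
      then have "l = f w" using asm B.limitin_metric_unique trivial_limit_sequentially by blast
      then show "l \<in> f ` X" using wX by simp
    qed
  qed
  have inv2: "(\<forall>k u v. u \<in> X \<longrightarrow> v \<in> X \<longrightarrow> c k u \<noteq> c k v \<longrightarrow> (1/2)^(k+1) \<le> d u v) \<longrightarrow>
         (\<forall>u\<in>X. \<forall>v\<in>X. baire_dist (inv_into (f`X) h u) (inv_into (f`X) h v) \<le> 2 * d u v)"
  proof (intro impI ballI)
    assume cc: "\<forall>k u v. u \<in> X \<longrightarrow> v \<in> X \<longrightarrow> c k u \<noteq> c k v \<longrightarrow> (1/2::real)^(k+1) \<le> d u v"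
    fix u v assume u: "u \<in> X" and v: "v \<in> X"
    show "baire_dist (inv_into (f`X) h u) (inv_into (f`X) h v) \<le> 2 * d u v"
    proof (cases "f u = f v")
      case True
      then show ?thesis using invh u v M.nonneg[of u v] by (simp add: baire_dist_def)
    next
      case False
      then obtain n where n: "baire_dist (f u) (f v) = (1/2)^n" "f u n \<noteq> f v n"
        using baire_dist_neq by blast
      have "(1/2::real)^(n+1) \<le> d u v" using cc u v n(2) unfolding f_def by auto
      then have "(1/2::real)^n \<le> 2 * d u v" by simp
      then show ?thesis using invh u v n(1) by simp
    qed
  qed
  show ?thesis using homeo lip2 invh closed inv2 unfolding h_def by blast
qed


lemma dense_seq:
  fixes X :: "'a set" and d :: "'a \<Rightarrow> 'a \<Rightarrow> real"
  assumes metric: "Metric_space X d"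
    and sep: "separable_space (Metric_space.mtopology X d)"
    and ne: "X \<noteq> {}"
  shows "\<exists>e::nat\<Rightarrow>'a. range e \<subseteq> X \<and> (\<forall>u\<in>X. \<forall>r>0. \<exists>j. d u (e j) < r)"
proof -
  interpret M: Metric_space X d by (rule metric)
  obtain C where C: "countable C" "C \<subseteq> X" "M.mtopology closure_of C = X"
    using sep unfolding separable_space_def by auto
  have "C \<noteq> {}" using C(3) ne by auto
  define e where "e = from_nat_into C"
  have rng: "range e \<subseteq> C" unfolding e_def using from_nat_into[OF \<open>C \<noteq> {}\<close>] by auto
  have surj: "\<And>y. y \<in> C \<Longrightarrow> \<exists>j. e j = y" unfolding e_def using from_nat_into_surj[OF C(1)] by blast
  have "\<forall>u\<in>X. \<forall>r>0. \<exists>j. d u (e j) < r"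
  proof (intro ballI allI impI)
    fix u and r :: real assume u: "u \<in> X" and r: "0 < r"
    then have "u \<in> M.mtopology closure_of C" using C(3) by simp
    then obtain y where y: "y \<in> C" "y \<in> M.mball u r" using r unfolding M.metric_closure_of by blast
    then have dy: "d u y < r" by simp
    obtain j where "e j = y" using surj y(1) by blast
    then show "\<exists>j. d u (e j) < r" using dy by blast
  qed
  note dn = this
  have rX: "range e \<subseteq> X" using rng C(2) by (rule subset_trans)
  show ?thesis
  proof (rule exI[of _ e], rule conjI)
    show "range e \<subseteq> X" by (rule rX)
    show "\<forall>u\<in>X. \<forall>r>0. \<exists>j. d u (e j) < r" by (rule dn)
  qed
qed

lemma clopen_code:
  fixes X :: "'a set" and d :: "'a \<Rightarrow> 'a \<Rightarrow> real" and \<epsilon> :: real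
  assumes metric: "Metric_space X d"
    and sep: "separable_space (Metric_space.mtopology X d)"
    and zerodim: "(Metric_space.mtopology X d) dim_le 0"
    and eps: "\<epsilon> > 0"
  shows "\<exists>g::'a\<Rightarrow>nat. (\<forall>u\<in>X. \<forall>v\<in>X. g u = g v \<longrightarrow> d u v \<le> \<epsilon>)
            \<and> (\<forall>u\<in>X. \<exists>e>0. \<forall>v\<in>X. d u v < e \<longrightarrow> g v = g u)"
proof (cases "X = {}")
  case True then show ?thesis by auto
next
  case False
  interpret M: Metric_space X d by (rule metric)
  obtain e :: "nat \<Rightarrow> 'a" where e: "range e \<subseteq> X" "\<forall>u\<in>X. \<forall>r>0. \<exists>j. d u (e j) < r"
    using dense_seq[OF metric sep False] by blast
  have base: "\<And>W x. openin M.mtopology W \<Longrightarrow> x \<in> W \<Longrightarrow>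
      \<exists>U V. openin M.mtopology U \<and> (closedin M.mtopology V \<and> openin M.mtopology V) \<and> x \<in> U \<and> U \<subseteq> V \<and> V \<subseteq> W"
  proof -
    fix W x assume W: "openin M.mtopology W" and x: "x \<in> W"
    have nb: "neighbourhood_base_of (\<lambda>U. closedin M.mtopology U \<and> openin M.mtopology U) M.mtopology"
      using zerodim dimension_le_0_neighbourhood_base_of_clopen by blast
    show "\<exists>U V. openin M.mtopology U \<and> (closedin M.mtopology V \<and> openin M.mtopology V) \<and> x \<in> U \<and> U \<subseteq> V \<and> V \<subseteq> W"
      using nb W x unfolding neighbourhood_base_of by blast
  qed
  define P where "P = (\<lambda>j m V. closedin M.mtopology V \<and> openin M.mtopology V
      \<and> M.mball (e j) ((1/2)^m) \<subseteq> V \<and> (\<forall>x\<in>V. \<forall>y\<in>V. d x y \<le> \<epsilon>))"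
  define G where "G = (\<lambda>n. case prod_decode n of (j, m) \<Rightarrow>
      if (\<exists>V. P j m V) then (SOME V. P j m V) else {})"
  have Gprop: "\<And>n. closedin M.mtopology (G n) \<and> openin M.mtopology (G n) \<and> (\<forall>x\<in>G n. \<forall>y\<in>G n. d x y \<le> \<epsilon>)"
  proof -
    fix n
    obtain j m where jm: "prod_decode n = (j, m)" by (metis surj_pair)
    show "closedin M.mtopology (G n) \<and> openin M.mtopology (G n) \<and> (\<forall>x\<in>G n. \<forall>y\<in>G n. d x y \<le> \<epsilon>)"
    proof (cases "\<exists>V. P j m V")
      case True
      then have "P j m (SOME V. P j m V)" by (rule someI_ex)
      then show ?thesis using True jm unfolding G_def P_def by simp
    next
      case False then have "G n = {}" using jm unfolding G_def by auto
      then show ?thesis by simp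
    qed
  qed
  have cover: "\<And>u. u \<in> X \<Longrightarrow> \<exists>n. u \<in> G n"
  proof -
    fix u assume u: "u \<in> X"
    have W1: "openin M.mtopology (M.mball u (\<epsilon>/2))" by simp
    have W2: "u \<in> M.mball u (\<epsilon>/2)" using u eps by simp
    obtain U V where UV: "openin M.mtopology U" "closedin M.mtopology V" "openin M.mtopology V"
      "u \<in> U" "U \<subseteq> V" "V \<subseteq> M.mball u (\<epsilon>/2)" using base[OF W1 W2] by blast
    obtain r where r: "r > 0" "M.mball u r \<subseteq> U" using UV(1,4) unfolding M.openin_mtopology by blast
    obtain m where m: "(1/2::real)^m < r/2" using small_pow[of "r/2"] r by auto
    have pm: "(0::real) < (1/2)^m" by simp
    obtain j where j: "d u (e j) < (1/2)^m" using e(2) u pm by blast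
    have ej: "e j \<in> X" using e(1) by auto
    have sub: "M.mball (e j) ((1/2)^m) \<subseteq> V"
    proof
      fix y assume "y \<in> M.mball (e j) ((1/2)^m)"
      then have y: "y \<in> X" "d (e j) y < (1/2)^m" by auto
      have "d u y \<le> d u (e j) + d (e j) y" using M.triangle u ej y(1) by blast
      then have "d u y < r" using j y(2) m by linarith
      then show "y \<in> V" using r UV(5) u y(1) by auto
    qed
    have diam: "\<forall>x\<in>V. \<forall>y\<in>V. d x y \<le> \<epsilon>"
    proof (intro ballI)
      fix x y assume "x \<in> V" "y \<in> V"
      then have x: "x \<in> X" "d u x < \<epsilon>/2" and y: "y \<in> X" "d u y < \<epsilon>/2" using UV(6) by auto
      have "d x y \<le> d x u + d u y" using M.triangle x(1) u y(1) by blast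
      then show "d x y \<le> \<epsilon>" using x y M.commute[of x u] by linarith
    qed
    have ex: "\<exists>V. P j m V" unfolding P_def using UV(2,3) sub diam by blast
    define n where "n = prod_encode (j, m)"
    have "G n = (SOME V. P j m V)" unfolding G_def n_def using ex by simp
    moreover have "P j m (SOME V. P j m V)" using ex by (rule someI_ex)
    moreover have "u \<in> M.mball (e j) ((1/2)^m)" using u ej j M.commute[of u "e j"] by simp
    ultimately have "u \<in> G n" unfolding P_def by blast
    then show "\<exists>n. u \<in> G n" by blast
  qed
  define g where "g = (\<lambda>u. LEAST n. u \<in> G n)"
  have gin: "\<And>u. u \<in> X \<Longrightarrow> u \<in> G (g u)" unfolding g_def using cover by (meson LeastI_ex)
  show ?thesis
  proof (rule exI[of _ g], intro conjI ballI impI)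
    fix u v assume u: "u \<in> X" and v: "v \<in> X" and eq: "g u = g v"
    then show "d u v \<le> \<epsilon>" using gin[OF u] gin[OF v] Gprop[of "g u"] by simp
  next
    fix u assume u: "u \<in> X"
    define n where "n = g u"
    define Ov where "Ov = G n - \<Union>(G ` {..<n})"
    have "closedin M.mtopology (\<Union>(G ` {..<n}))"
      using Gprop by (intro closedin_Union) auto
    then have opO: "openin M.mtopology Ov" unfolding Ov_def using Gprop by (intro openin_diff) auto
    have nk: "\<And>k. k < n \<Longrightarrow> u \<notin> G k" unfolding n_def g_def by (rule not_less_Least)
    have uO: "u \<in> Ov" unfolding Ov_def using gin[OF u] nk n_def by auto
    obtain r where r: "r > 0" "M.mball u r \<subseteq> Ov" using opO uO unfolding M.openin_mtopology by blast
    show "\<exists>e>0. \<forall>v\<in>X. d u v < e \<longrightarrow> g v = g u"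
    proof (rule exI[of _ r], intro conjI ballI impI)
      show "r > 0" by fact
      fix v assume v: "v \<in> X" and dv: "d u v < r"
      then have "v \<in> Ov" using r u by auto
      then have vG: "v \<in> G n" and vk: "\<And>k. k < n \<Longrightarrow> v \<notin> G k" unfolding Ov_def by auto
      have "g v = n" unfolding g_def
      proof (rule Least_equality)
        show "v \<in> G n" by (rule vG)
        fix y assume "v \<in> G y" then show "n \<le> y" using vk not_less by blast
      qed
      then show "g v = g u" unfolding n_def by simp
    qed
  qed
qed

lemma general_code:
  fixes X :: "'a set" and d :: "'a \<Rightarrow> 'a \<Rightarrow> real"
  assumes metric: "Metric_space X d"
    and sep: "separable_space (Metric_space.mtopology X d)"
    and zerodim: "(Metric_space.mtopology X d) dim_le 0"
    and bdd: "\<forall>x\<in>X. \<forall>y\<in>X. d x y \<le> 1"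
  shows "\<exists>c::nat \<Rightarrow> 'a \<Rightarrow> nat.
     (\<forall>k u v. u \<in> X \<longrightarrow> v \<in> X \<longrightarrow> (\<forall>i<k. c i u = c i v) \<longrightarrow> d u v \<le> (1/2)^k)
   \<and> (\<forall>i u. u \<in> X \<longrightarrow> (\<exists>e>0. \<forall>v\<in>X. d u v < e \<longrightarrow> c i v = c i u))"
proof -
  have "\<forall>i. \<exists>g::'a\<Rightarrow>nat. (\<forall>u\<in>X. \<forall>v\<in>X. g u = g v \<longrightarrow> d u v \<le> (1/2)^(Suc i))
            \<and> (\<forall>u\<in>X. \<exists>e>0. \<forall>v\<in>X. d u v < e \<longrightarrow> g v = g u)"
  proof
    fix i
    have "(0::real) < (1/2)^(Suc i)" by simp
    then show "\<exists>g::'a\<Rightarrow>nat. (\<forall>u\<in>X. \<forall>v\<in>X. g u = g v \<longrightarrow> d u v \<le> (1/2)^(Suc i))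
            \<and> (\<forall>u\<in>X. \<exists>e>0. \<forall>v\<in>X. d u v < e \<longrightarrow> g v = g u)"
      by (rule clopen_code[OF metric sep zerodim])
  qed
  from choice[OF this] obtain c :: "nat \<Rightarrow> 'a \<Rightarrow> nat" where c: "\<And>i. (\<forall>u\<in>X. \<forall>v\<in>X. c i u = c i v \<longrightarrow> d u v \<le> (1/2)^(Suc i))
            \<and> (\<forall>u\<in>X. \<exists>e>0. \<forall>v\<in>X. d u v < e \<longrightarrow> c i v = c i u)"
    by blast
  show ?thesis
  proof (rule exI[of _ c], intro conjI allI impI)
    fix k u v assume u: "u \<in> X" and v: "v \<in> X" and eq: "\<forall>i<k. c i u = c i v"
    show "d u v \<le> (1/2)^k"
    proof (cases k)
      case 0 then show ?thesis using bdd u v by simp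
    next
      case (Suc j)
      then have "c j u = c j v" using eq by simp
      then show ?thesis using c[of j] u v Suc by blast
    qed
  next
    fix i u assume "u \<in> X"
    then show "\<exists>e>0. \<forall>v\<in>X. d u v < e \<longrightarrow> c i v = c i u" using c[of i] by blast
  qed
qed

lemma ultra_code:
  fixes X :: "'a set" and d :: "'a \<Rightarrow> 'a \<Rightarrow> real"
  assumes metric: "Metric_space X d"
    and sep: "separable_space (Metric_space.mtopology X d)"
    and bdd: "\<forall>x\<in>X. \<forall>y\<in>X. d x y \<le> 1"
    and ultra: "ultrametric X d"
  shows "\<exists>c::nat \<Rightarrow> 'a \<Rightarrow> nat.
     (\<forall>k u v. u \<in> X \<longrightarrow> v \<in> X \<longrightarrow> (\<forall>i<k. c i u = c i v) \<longrightarrow> d u v \<le> (1/2)^k)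
   \<and> (\<forall>i u. u \<in> X \<longrightarrow> (\<exists>e>0. \<forall>v\<in>X. d u v < e \<longrightarrow> c i v = c i u))
   \<and> (\<forall>k u v. u \<in> X \<longrightarrow> v \<in> X \<longrightarrow> c k u \<noteq> c k v \<longrightarrow> (1/2)^(k+1) \<le> d u v)"
proof (cases "X = {}")
  case True then show ?thesis by auto
next
  case False
  interpret M: Metric_space X d by (rule metric)
  obtain e :: "nat \<Rightarrow> 'a" where e: "range e \<subseteq> X" "\<forall>u\<in>X. \<forall>r>0. \<exists>j. d u (e j) < r"
    using dense_seq[OF metric sep False] by blast
  define c where "c = (\<lambda>i u. LEAST j. d u (e j) < (1/2::real)^(Suc i))"
  have ex: "\<And>i u. u \<in> X \<Longrightarrow> d u (e (c i u)) < (1/2)^(Suc i)"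
  proof -
    fix i u assume u: "u \<in> X"
    have pos: "(0::real) < (1/2)^(Suc i)" by simp
    have "\<exists>j. d u (e j) < (1/2::real)^(Suc i)" using e(2) u pos by blast
    then show "d u (e (c i u)) < (1/2)^(Suc i)" unfolding c_def by (rule LeastI_ex)
  qed
  have um: "\<And>x y z. x \<in> X \<Longrightarrow> y \<in> X \<Longrightarrow> z \<in> X \<Longrightarrow> d x z \<le> max (d x y) (d y z)"
    using ultra unfolding ultrametric_def by blast
  have same: "\<And>i u v. u \<in> X \<Longrightarrow> v \<in> X \<Longrightarrow> d u v < (1/2)^(Suc i) \<Longrightarrow> c i v = c i u"
  proof -
    fix i u v assume u: "u \<in> X" and v: "v \<in> X" and dv: "d u v < (1/2::real)^(Suc i)"
    have "\<And>j. d v (e j) < (1/2::real)^(Suc i) \<longleftrightarrow> d u (e j) < (1/2)^(Suc i)"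
    proof -
      fix j
      have ej: "e j \<in> X" using e(1) by auto
      have "d v (e j) \<le> max (d v u) (d u (e j))" using um v u ej by blast
      moreover have "d u (e j) \<le> max (d u v) (d v (e j))" using um v u ej by blast
      ultimately show "d v (e j) < (1/2::real)^(Suc i) \<longleftrightarrow> d u (e j) < (1/2)^(Suc i)"
        using dv M.commute[of u v] by (auto simp: max_def split: if_splits)
    qed
    then show "c i v = c i u" unfolding c_def by simp
  qed
  show ?thesis
  proof (rule exI[of _ c], intro conjI allI impI)
    fix k u v assume u: "u \<in> X" and v: "v \<in> X" and eq: "\<forall>i<k. c i u = c i v"
    show "d u v \<le> (1/2)^k"
    proof (cases k)
      case 0 then show ?thesis using bdd u v by simp
    next
      case (Suc j)
      then have cj: "c j u = c j v" using eq by simp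
      define J where "J = c j u"
      have ej: "e J \<in> X" using e(1) by auto
      have a1: "d u (e J) < (1/2)^(Suc j)" using ex[OF u] J_def by simp
      have a2: "d v (e J) < (1/2)^(Suc j)" using ex[OF v] J_def cj by simp
      have "d u v \<le> max (d u (e J)) (d (e J) v)" using um u ej v by blast
      then have "d u v < (1/2)^(Suc j)" using a1 a2 M.commute[of v "e J"] by simp
      then show ?thesis using Suc by simp
    qed
  next
    fix i u assume u: "u \<in> X"
    show "\<exists>e>0. \<forall>v\<in>X. d u v < e \<longrightarrow> c i v = c i u"
      by (rule exI[of _ "(1/2)^(Suc i)"]) (auto intro: same[OF u])
  next
    fix k u v assume u: "u \<in> X" and v: "v \<in> X" and ne: "c k u \<noteq> c k v"
    show "(1/2)^(k+1) \<le> d u v"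
    proof (rule ccontr)
      assume "\<not> (1/2::real)^(k+1) \<le> d u v"
      then have "d u v < (1/2)^(Suc k)" by simp
      then have "c k v = c k u" by (rule same[OF u v])
      with ne show False by simp
    qed
  qed
qed

theorem mainTheorem11:
  fixes X :: "'a set" and d :: "'a \<Rightarrow> 'a \<Rightarrow> real"
  assumes metric: "Metric_space X d"
    and sep: "separable_space (Metric_space.mtopology X d)"
    and zerodim: "(Metric_space.mtopology X d) dim_le 0"
    and bdd: "\<forall>x\<in>X. \<forall>y\<in>X. d x y \<le> 1"
  shows
    "(\<exists>A h. homeomorphic_map (subtopology baire_topology A) (Metric_space.mtopology X d) h
        \<and> (\<forall>x\<in>A. \<forall>y\<in>A. d (h x) (h y) \<le> baire_dist x y))
   \<and> (ultrametric X d \<longrightarrow>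
     (\<exists>A h. homeomorphic_map (subtopology baire_topology A) (Metric_space.mtopology X d) h
        \<and> (\<forall>x\<in>A. \<forall>y\<in>A. d (h x) (h y) \<le> baire_dist x y)
        \<and> (\<forall>u\<in>X. \<forall>v\<in>X. baire_dist (inv_into A h u) (inv_into A h v) \<le> 2 * d u v)))
   \<and> (Metric_space.mcomplete X d \<longrightarrow>
     (\<exists>A h. closedin baire_topology A
        \<and> homeomorphic_map (subtopology baire_topology A) (Metric_space.mtopology X d) h
        \<and> (\<forall>x\<in>A. \<forall>y\<in>A. d (h x) (h y) \<le> baire_dist x y)))
   \<and> (ultrametric X d \<and> Metric_space.mcomplete X d \<longrightarrow>
     (\<exists>A h. closedin baire_topology A
        \<and> homeomorphic_map (subtopology baire_topology A) (Metric_space.mtopology X d) h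
        \<and> (\<forall>x\<in>A. \<forall>y\<in>A. d (h x) (h y) \<le> baire_dist x y)
        \<and> (\<forall>u\<in>X. \<forall>v\<in>X. baire_dist (inv_into A h u) (inv_into A h v) \<le> 2 * d u v)))"
proof -
  obtain c :: "nat \<Rightarrow> 'a \<Rightarrow> nat" where c: "\<forall>k u v. u \<in> X \<longrightarrow> v \<in> X \<longrightarrow> (\<forall>i<k. c i u = c i v) \<longrightarrow> d u v \<le> (1/2)^k"
     "\<forall>i u. u \<in> X \<longrightarrow> (\<exists>e>0. \<forall>v\<in>X. d u v < e \<longrightarrow> c i v = c i u)"
    using general_code[OF metric sep zerodim bdd] by blast
  have G: "homeomorphic_map (subtopology baire_topology ((\<lambda>u i. c i u)`X)) (Metric_space.mtopology X d) (inv_into X (\<lambda>u i. c i u))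
     \<and> (\<forall>x\<in>(\<lambda>u i. c i u)`X. \<forall>y\<in>(\<lambda>u i. c i u)`X. d (inv_into X (\<lambda>u i. c i u) x) (inv_into X (\<lambda>u i. c i u) y) \<le> baire_dist x y)
     \<and> (Metric_space.mcomplete X d \<longrightarrow> closedin baire_topology ((\<lambda>u i. c i u)`X))"
    using coding[OF metric, of c "\<lambda>u i. c i u"] c by blast
  have U: "ultrametric X d \<longrightarrow> (\<exists>A h. homeomorphic_map (subtopology baire_topology A) (Metric_space.mtopology X d) h
        \<and> (\<forall>x\<in>A. \<forall>y\<in>A. d (h x) (h y) \<le> baire_dist x y)
        \<and> (\<forall>u\<in>X. \<forall>v\<in>X. baire_dist (inv_into A h u) (inv_into A h v) \<le> 2 * d u v)
        \<and> (Metric_space.mcomplete X d \<longrightarrow> closedin baire_topology A))"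
  proof
    assume ultra: "ultrametric X d"
    obtain c' :: "nat \<Rightarrow> 'a \<Rightarrow> nat" where c': "\<forall>k u v. u \<in> X \<longrightarrow> v \<in> X \<longrightarrow> (\<forall>i<k. c' i u = c' i v) \<longrightarrow> d u v \<le> (1/2)^k"
       "\<forall>i u. u \<in> X \<longrightarrow> (\<exists>e>0. \<forall>v\<in>X. d u v < e \<longrightarrow> c' i v = c' i u)"
       "\<forall>k u v. u \<in> X \<longrightarrow> v \<in> X \<longrightarrow> c' k u \<noteq> c' k v \<longrightarrow> (1/2)^(k+1) \<le> d u v"
      using ultra_code[OF metric sep bdd ultra] by blast
    have R: "homeomorphic_map (subtopology baire_topology ((\<lambda>u i. c' i u)`X)) (Metric_space.mtopology X d) (inv_into X (\<lambda>u i. c' i u))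
     \<and> (\<forall>x\<in>(\<lambda>u i. c' i u)`X. \<forall>y\<in>(\<lambda>u i. c' i u)`X. d (inv_into X (\<lambda>u i. c' i u) x) (inv_into X (\<lambda>u i. c' i u) y) \<le> baire_dist x y)
     \<and> (Metric_space.mcomplete X d \<longrightarrow> closedin baire_topology ((\<lambda>u i. c' i u)`X))
     \<and> (\<forall>u\<in>X. \<forall>v\<in>X. baire_dist (inv_into ((\<lambda>u i. c' i u)`X) (inv_into X (\<lambda>u i. c' i u)) u) (inv_into ((\<lambda>u i. c' i u)`X) (inv_into X (\<lambda>u i. c' i u)) v) \<le> 2 * d u v)"
      using coding[OF metric, of c' "\<lambda>u i. c' i u"] c' by blast
    then show "\<exists>A h. homeomorphic_map (subtopology baire_topology A) (Metric_space.mtopology X d) h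
        \<and> (\<forall>x\<in>A. \<forall>y\<in>A. d (h x) (h y) \<le> baire_dist x y)
        \<and> (\<forall>u\<in>X. \<forall>v\<in>X. baire_dist (inv_into A h u) (inv_into A h v) \<le> 2 * d u v)
        \<and> (Metric_space.mcomplete X d \<longrightarrow> closedin baire_topology A)" by blast
  qed
  show ?thesis using G U by blast
qed

end
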